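(* Let $\mathcal N=(\mathcal L,\mathcal I,D_{\mathcal L})$ be a network with a binary collision profile and character $D^*$. (i) If $S$ is a collision-free framed schedule of frame length $T_F\ge 2D^*+1$ whose rate vector $R_S$ exists, then $R_S\in(1-D^*/T_F)\,\widetilde{\mathcal R}^{(\mathcal L,\mathcal I)}$, and hence $R_S\in\widetilde{\mathcal R}^{(\mathcal L,\mathcal I)}$. (ii) For every $R\in\widetilde{\mathcal R}^{(\mathcal L,\mathcal I)}$ and every $\epsilon>0$ there exist a frame length $T_F$ and a collision-free framed schedule $S$ of frame length $T_F$ whose rate vector exists and satisfies $R_S(l)\ge R(l)-\epsilon$ for all $l\in\mathcal L$.
   Context: A network is a triple $\mathcal N=(\mathcal L,\mathcal I,D_{\mathcal L})$ where $\mathcal L$ is a finite nonempty set of links, each $\mathcal I(l)$ is a collection of nonempty subsets of $\mathcal L$, and $D_{\mathcal L}$ assigns an integer $D_{\mathcal L}(l,l')$ to every pair with $l'\in\phi$ for some $\phi\in\mathcal I(l)$. The profile is binary if every $\phi\in\mathcal I(l)$ is a singleton; then $\mathcal I(l)$ is identified with a subset of $\mathcal L$. The character is $D^*=\max_{l}\max_{\phi\in\mathcal I(l)}\max_{l'\in\phi}|D_{\mathcal L}(l,l')|$ (0 if there are no collision sets). A schedule is a map $S:\mathcal L\times\mathbb Z\to\{0,1\}$; $S(l,t)$ has a collision if there is $\phi\in\mathcal I(l)$ with $S(l',t+D_{\mathcal L}(l,l'))=1$ for all $l'\in\phi$; $S$ is collision free if no $(l,t)$ with $S(l,t)=1$ has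 a collision. $R_S(l)=\lim_{T\to\infty}\frac1T\sum_{t=0}^{T-1}\iota\big(S(l,t)=1\text{ and collision free}\big)$ when the limit exists; $R_S=(R_S(l))_l$ is the rate vector when all limits exist. For an integer $T_F\ge D^*+1$, a framed schedule of frame length $T_F$ is a schedule $S$ with $S(l,t)=0$ for $t<0$, such that for every $k\ge0$ and every $l$: $S(l,kT_F+i)=0$ for $i=T_F-D^*,\dots,T_F-1$, and the values $S(l,kT_F+i)$, $i=0,\dots,T_F-D^*-1$, are all equal. An independent set of $(\mathcal L,\mathcal I)$ is a subset $A\subseteq\mathcal L$ such that there are no $l\in A$ and $\phi\in\mathcal I(l)$ with $\phi\subseteq A$; $\widetilde{\mathcal R}^{(\mathcal L,\mathcal I)}\subseteq\mathbb R^{\mathcal L}$ is the convex hull of the indicator vectors of all independent sets of $(\mathcal L,\mathcal I)$. *)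

theory Defs
  imports "HOL-Analysis.Analysis"
begin

text \<open>The link set is modelled by a finite type 'l (nonempty automatically).
  A collision profile is I :: 'l \<Rightarrow> 'l set set, delays D :: 'l \<Rightarrow> 'l \<Rightarrow> int
  (only relevant on pairs (l,l') with l' in some collision set of l).
  A schedule is S :: 'l \<Rightarrow> int \<Rightarrow> bool (True = 1, False = 0).\<close>

definition collision_sets_nonempty :: "('l \<Rightarrow> 'l set set) \<Rightarrow> bool" where
  "collision_sets_nonempty I \<longleftrightarrow> (\<forall>l. \<forall>\<phi>\<in>I l. \<phi> \<noteq> {})"

definition binary_profile :: "('l \<Rightarrow> 'l set set) \<Rightarrow> bool" where
  "binary_profile I \<longleftrightarrow> (\<forall>l. \<forall>\<phi>\<in>I l. \<exists>l'. \<phi> = {l'})"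

definition character :: "('l \<Rightarrow> 'l set set) \<Rightarrow> ('l \<Rightarrow> 'l \<Rightarrow> int) \<Rightarrow> nat" where
  "character I D = nat (Max (insert 0 {\<bar>D l l'\<bar> | l \<phi> l'. \<phi> \<in> I l \<and> l' \<in> \<phi>}))"

definition has_collision ::
  "('l \<Rightarrow> 'l set set) \<Rightarrow> ('l \<Rightarrow> 'l \<Rightarrow> int) \<Rightarrow> ('l \<Rightarrow> int \<Rightarrow> bool) \<Rightarrow> 'l \<Rightarrow> int \<Rightarrow> bool" where
  "has_collision I D S l t \<longleftrightarrow> (\<exists>\<phi>\<in>I l. \<forall>l'\<in>\<phi>. S l' (t + D l l'))"

definition collision_free ::
  "('l \<Rightarrow> 'l set set) \<Rightarrow> ('l \<Rightarrow> 'l \<Rightarrow> int) \<Rightarrow> ('l \<Rightarrow> int \<Rightarrow> bool) \<Rightarrow> bool" where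
  "collision_free I D S \<longleftrightarrow> (\<forall>l t. S l t \<longrightarrow> \<not> has_collision I D S l t)"

definition avg_success ::
  "('l \<Rightarrow> 'l set set) \<Rightarrow> ('l \<Rightarrow> 'l \<Rightarrow> int) \<Rightarrow> ('l \<Rightarrow> int \<Rightarrow> bool) \<Rightarrow> 'l \<Rightarrow> nat \<Rightarrow> real" where
  "avg_success I D S l T =
     (\<Sum>t<T. if S l (int t) \<and> \<not> has_collision I D S l (int t) then 1 else 0) / real T"

definition rate_exists ::
  "('l \<Rightarrow> 'l set set) \<Rightarrow> ('l \<Rightarrow> 'l \<Rightarrow> int) \<Rightarrow> ('l \<Rightarrow> int \<Rightarrow> bool) \<Rightarrow> bool" where
  "rate_exists I D S \<longleftrightarrow> (\<forall>l. convergent (avg_success I D S l))"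

definition rate_vector ::
  "('l \<Rightarrow> 'l set set) \<Rightarrow> ('l \<Rightarrow> 'l \<Rightarrow> int) \<Rightarrow> ('l \<Rightarrow> int \<Rightarrow> bool) \<Rightarrow> real ^ 'l" where
  "rate_vector I D S = (\<chi> l. lim (avg_success I D S l))"

definition framed_schedule ::
  "('l \<Rightarrow> 'l set set) \<Rightarrow> ('l \<Rightarrow> 'l \<Rightarrow> int) \<Rightarrow> nat \<Rightarrow> ('l \<Rightarrow> int \<Rightarrow> bool) \<Rightarrow> bool" where
  "framed_schedule I D TF S \<longleftrightarrow>
     TF \<ge> character I D + 1 \<and>
     (\<forall>l t. t < 0 \<longrightarrow> \<not> S l t) \<and>
     (\<forall>k::nat. \<forall>l.
        (\<forall>i::nat. TF - character I D \<le> i \<and> i < TF \<longrightarrow> \<not> S l (int k * int TF + int i)) \<and>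
        (\<forall>i::nat. i < TF - character I D \<longrightarrow> S l (int k * int TF + int i) = S l (int k * int TF)))"

definition independent_set :: "('l \<Rightarrow> 'l set set) \<Rightarrow> 'l set \<Rightarrow> bool" where
  "independent_set I A \<longleftrightarrow> \<not> (\<exists>l\<in>A. \<exists>\<phi>\<in>I l. \<phi> \<subseteq> A)"

definition indicator_vec :: "'l set \<Rightarrow> real ^ 'l" where
  "indicator_vec A = (\<chi> l. if l \<in> A then 1 else 0)"

definition rate_region :: "('l::finite \<Rightarrow> 'l set set) \<Rightarrow> (real ^ 'l) set" where
  "rate_region I = convex hull {indicator_vec A | A. independent_set I A}"

end

theory Submission
  imports Defs
begin


lemma sum_split_add:
  fixes f :: "nat \<Rightarrow> real"
  shows "(\<Sum>t<a+b. f t) = (\<Sum>t<a. f t) + (\<Sum>i<b. f (a+i))"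
  by (induction b) (auto simp: add.assoc)

lemma periodic_sum:
  fixes f :: "nat \<Rightarrow> real"
  assumes "\<And>t. f (t + P) = f t"
  shows "(\<Sum>t<q*P + r. f t) = q * (\<Sum>t<P. f t) + (\<Sum>t<r. f t)"
proof (induction q)
  case 0 then show ?case by simp
next
  case (Suc q)
  have "(\<Sum>t<Suc q*P + r. f t) = (\<Sum>t<P + (q*P + r). f t)" by (simp add: add.assoc)
  also have "\<dots> = (\<Sum>t<P. f t) + (\<Sum>i<q*P+r. f (P+i))" by (rule sum_split_add)
  also have "(\<Sum>i<q*P+r. f (P+i)) = (\<Sum>i<q*P+r. f i)"
    using assms by (simp add: add.commute)
  finally show ?case using Suc by (simp add: algebra_simps)
qed

lemma periodic_avg:
  fixes f :: "nat \<Rightarrow> real"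
  assumes per: "\<And>t. f (t + P) = f t" and P: "P > 0"
  shows "(\<lambda>T. (\<Sum>t<T. f t) / real T) \<longlonglongrightarrow> (\<Sum>t<P. f t) / real P"
proof -
  define s where "s = (\<Sum>t<P. f t)"
  define B where "B = (\<Sum>t<P. \<bar>f t\<bar>)"
  have sB: "\<bar>s\<bar> \<le> B" unfolding s_def B_def by (rule sum_abs)
  have bnd: "\<bar>(\<Sum>t<T. f t) - real T / real P * s\<bar> \<le> 2 * B" for T
  proof -
    define q r where "q = T div P" "r = T mod P"
    have T: "T = q*P + r" unfolding q_r_def by simp
    have r: "r < P" unfolding q_r_def using P by simp
    have e1: "(\<Sum>t<T. f t) = q * s + (\<Sum>t<r. f t)" unfolding T s_def using periodic_sum[of f P q r] per by blast
    have e2: "real T / real P * s = q * s + real r / real P * s"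
      using P unfolding T by (simp add: field_simps)
    have b1: "\<bar>\<Sum>t<r. f t\<bar> \<le> B"
    proof -
      have "\<bar>\<Sum>t<r. f t\<bar> \<le> (\<Sum>t<r. \<bar>f t\<bar>)" by (rule sum_abs)
      also have "\<dots> \<le> B" unfolding B_def by (rule sum_mono2) (use r in auto)
      finally show ?thesis .
    qed
    have b2: "\<bar>real r / real P * s\<bar> \<le> B"
    proof -
      have "\<bar>real r / real P\<bar> \<le> 1" using r P by simp
      then have "\<bar>real r / real P * s\<bar> \<le> 1 * \<bar>s\<bar>" unfolding abs_mult
        by (intro mult_right_mono) auto
      then show ?thesis using sB by simp
    qed
    have eq: "(\<Sum>t<T. f t) - real T / real P * s = (\<Sum>t<r. f t) - real r / real P * s"
      using e1 e2 by linarith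
    have "\<bar>(\<Sum>t<r. f t) - real r / real P * s\<bar> \<le> \<bar>\<Sum>t<r. f t\<bar> + \<bar>real r / real P * s\<bar>"
      by (rule abs_triangle_ineq4)
    also have "\<dots> \<le> B + B" using b1 b2 by (rule add_mono)
    finally show ?thesis unfolding eq by simp
  qed
  have "(\<lambda>T. (\<Sum>t<T. f t) / real T - s / real P) \<longlonglongrightarrow> 0"
  proof (rule Lim_null_comparison)
    show "\<forall>\<^sub>F T in sequentially. norm ((\<Sum>t<T. f t) / real T - s / real P) \<le> 2 * B / real T"
      unfolding eventually_sequentially
    proof (intro exI allI impI)
      fix T :: nat assume "T \<ge> 1"
      then have Tp: "real T > 0" by simp
      have "(\<Sum>t<T. f t) / real T - s / real P = ((\<Sum>t<T. f t) - real T / real P * s) / real T"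
        using Tp by (simp add: field_simps)
      then show "norm ((\<Sum>t<T. f t) / real T - s / real P) \<le> 2 * B / real T"
        using bnd[of T] Tp by (simp add: divide_right_mono)
    qed
    show "(\<lambda>T. 2 * B / real T) \<longlonglongrightarrow> 0" by (rule lim_const_over_n)
  qed
  then show ?thesis unfolding s_def by (simp add: LIM_zero_iff)
qed

lemma mod_add_same_frame:
  fixes a b TF :: nat
  assumes "a mod TF + b < TF"
  shows "(a + b) div TF = a div TF \<and> (a + b) mod TF = a mod TF + b"
proof -
  have TF: "TF \<noteq> 0" using assms by simp
  have e: "a + b = (a mod TF + b) + a div TF * TF" by simp
  have "(a + b) div TF = a div TF + (a mod TF + b) div TF"
    by (subst e, rule div_mult_self1[OF TF])
  moreover have "(a + b) mod TF = (a mod TF + b) mod TF"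
    by (subst e, rule mod_mult_self1)
  ultimately show ?thesis using assms by simp
qed



lemma char_bound:
  fixes I :: "'l::finite \<Rightarrow> 'l set set"
  assumes "\<phi> \<in> I l" "l' \<in> \<phi>"
  shows "\<bar>D l l'\<bar> \<le> int (character I D)"
proof -
  let ?M = "{\<bar>D l l'\<bar> | l \<phi> l'. \<phi> \<in> I l \<and> l' \<in> \<phi>}"
  have "?M \<subseteq> (\<lambda>p. \<bar>D (fst p) (snd p)\<bar>) ` UNIV"
  proof
    fix x assume "x \<in> ?M"
    then obtain l \<phi> l' where "x = \<bar>D l l'\<bar>" by blast
    then show "x \<in> (\<lambda>p. \<bar>D (fst p) (snd p)\<bar>) ` UNIV" by (intro image_eqI[where x="(l,l')"]) auto
  qed
  then have fin: "finite (insert 0 ?M)" by (meson finite finite_imageI finite_insert finite_subset)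
  have "\<bar>D l l'\<bar> \<le> Max (insert 0 ?M)" using assms fin by (intro Max_ge) auto
  moreover have "Max (insert 0 ?M) \<le> int (nat (Max (insert 0 ?M)))" by simp
  ultimately show ?thesis unfolding character_def by linarith
qed

lemma frame_sum:
  assumes fr: "framed_schedule I D TF S"
  shows "(\<Sum>t<K*TF. if S l (int t) then 1 else 0 :: real)
        = real (TF - character I D) * (\<Sum>k<K. if S l (int k * int TF) then 1 else 0)"
proof (induction K)
  case 0 then show ?case by simp
next
  case (Suc K)
  let ?d = "character I D"
  have TF: "TF \<ge> ?d + 1" using fr unfolding framed_schedule_def by simp
  have fr1: "\<And>i. TF - ?d \<le> i \<Longrightarrow> i < TF \<Longrightarrow> \<not> S l (int K * int TF + int i)"
    and fr2: "\<And>i. i < TF - ?d \<Longrightarrow> S l (int K * int TF + int i) = S l (int K * int TF)"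
    using fr unfolding framed_schedule_def by blast+
  have "(\<Sum>t<Suc K*TF. if S l (int t) then 1 else 0 :: real)
      = (\<Sum>t<K*TF. if S l (int t) then 1 else 0) + (\<Sum>i<TF. if S l (int (K*TF+i)) then 1 else 0)"
    using sum_split_add[of "\<lambda>t. if S l (int t) then 1 else 0" "K*TF" TF] by (simp add: add.commute)
  also have "(\<Sum>i<TF. if S l (int (K*TF+i)) then 1 else 0 :: real)
      = (\<Sum>i<(TF - ?d) + ?d. if S l (int K * int TF + int i) then 1 else 0)"
    using TF by simp
  also have "\<dots> = (\<Sum>i<TF - ?d. if S l (int K * int TF + int i) then 1 else 0)
       + (\<Sum>i<?d. if S l (int K * int TF + int (TF - ?d + i)) then 1 else 0)"
    by (rule sum_split_add)
  also have "(\<Sum>i<?d. if S l (int K * int TF + int (TF - ?d + i)) then 1 else 0 :: real) = 0"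
  proof (intro sum.neutral ballI)
    fix i assume "i \<in> {..<?d}"
    then have "\<not> S l (int K * int TF + int (TF - ?d + i))" using TF by (intro fr1) auto
    then show "(if S l (int K * int TF + int (TF - ?d + i)) then 1 else 0 :: real) = 0" by simp
  qed
  also have "(\<Sum>i<TF - ?d. if S l (int K * int TF + int i) then 1 else 0 :: real)
       = (\<Sum>i<TF - ?d. if S l (int K * int TF) then 1 else 0)"
    using fr2 by (intro sum.cong) auto
  finally have X: "(\<Sum>t<Suc K*TF. if S l (int t) then 1 else 0 :: real)
     = (\<Sum>t<K*TF. if S l (int t) then 1 else 0) + ((\<Sum>i<TF - ?d. if S l (int K * int TF) then 1 else 0) + 0)" .
  have C: "(\<Sum>i<TF - ?d. if S l (int K * int TF) then 1 else 0 :: real) = real (TF - ?d) * (if S l (int K * int TF) then 1 else 0)"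
    by simp
  show ?case unfolding X C Suc.IH sum.lessThan_Suc by (simp add: distrib_left)
qed

lemma frame_indep:
  fixes I :: "'l::finite \<Rightarrow> 'l set set"
  assumes bin: "binary_profile I" and fr: "framed_schedule I D TF S"
    and big: "TF \<ge> 2 * character I D + 1" and cf: "collision_free I D S"
  shows "independent_set I {l. S l (int k * int TF)}"
  unfolding independent_set_def
proof
  assume "\<exists>l\<in>{l. S l (int k * int TF)}. \<exists>\<phi>\<in>I l. \<phi> \<subseteq> {l. S l (int k * int TF)}"
  then obtain l \<phi> where l: "S l (int k * int TF)" and \<phi>: "\<phi> \<in> I l" and sub: "\<phi> \<subseteq> {l. S l (int k * int TF)}"
    by blast
  obtain l' where \<phi>': "\<phi> = {l'}" using bin \<phi> unfolding binary_profile_def by blast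
  let ?d = "character I D"
  have fr2: "\<And>l i. i < TF - ?d \<Longrightarrow> S l (int k * int TF + int i) = S l (int k * int TF)"
    using fr unfolding framed_schedule_def by blast
  have l': "S l' (int k * int TF)" using sub \<phi>' by auto
  have dd: "\<bar>D l l'\<bar> \<le> int ?d" using char_bound[of \<phi> I l l' D] \<phi> \<phi>' by simp
  show False
  proof (cases "D l l' \<ge> 0")
    case True
    have "nat (D l l') < TF - ?d" using dd big True by linarith
    then have "S l' (int k * int TF + D l l')" using fr2[of "nat (D l l')" l'] l' True by simp
    then have "has_collision I D S l (int k * int TF)"
      unfolding has_collision_def using \<phi> \<phi>' by auto
    then show False using cf l unfolding collision_free_def by blast
  next
    case False
    have "nat (- D l l') < TF - ?d" using dd big False by linarith
    then have sl: "S l (int k * int TF + (- D l l'))" using fr2[of "nat (- D l l')" l] l False by simp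
    have "has_collision I D S l (int k * int TF + (- D l l'))"
      unfolding has_collision_def using \<phi> \<phi>' l' by (intro bexI[of _ \<phi>]) auto
    then show False using cf sl unfolding collision_free_def by blast
  qed
qed



lemma region_fin:
  fixes I :: "'l::finite \<Rightarrow> 'l set set"
  shows "{indicator_vec A | A. independent_set I A} = indicator_vec ` {A. independent_set I A}"
    and "finite {indicator_vec A | A. independent_set I A}"
  by auto

lemma indicator_vec_empty_in:
  fixes I :: "'l::finite \<Rightarrow> 'l set set"
  shows "(0::real^'l) \<in> rate_region I"
proof -
  have "indicator_vec {} = (0::real^'l)" unfolding indicator_vec_def by (simp add: vec_eq_iff)
  moreover have "independent_set I {}" unfolding independent_set_def by simp
  ultimately have "(0::real^'l) \<in> {indicator_vec A | A. independent_set I A}" by force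
  then show ?thesis unfolding rate_region_def by (rule hull_inc)
qed

lemma indicator_vec_nth: "indicator_vec A $ l = (if l \<in> A then 1 else 0)"
  unfolding indicator_vec_def by simp

lemma avg_cf:
  assumes "collision_free I D S"
  shows "avg_success I D S l T = (\<Sum>t<T. if S l (int t) then 1 else 0) / real T"
proof -
  have "(\<Sum>t<T. if S l (int t) \<and> \<not> has_collision I D S l (int t) then 1 else 0 :: real)
     = (\<Sum>t<T. if S l (int t) then 1 else 0)"
    using assms unfolding collision_free_def by (intro sum.cong) auto
  then show ?thesis unfolding avg_success_def by simp
qed

lemma part1:
  fixes I :: "'l::finite \<Rightarrow> 'l set set" and D :: "'l \<Rightarrow> 'l \<Rightarrow> int"
  assumes bin: "binary_profile I" and fr: "framed_schedule I D TF S"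
    and big: "TF \<ge> 2 * character I D + 1" and cf: "collision_free I D S"
    and re: "rate_exists I D S"
  shows "rate_vector I D S \<in> (\<lambda>x. (1 - real (character I D) / real TF) *\<^sub>R x) ` rate_region I
     \<and> rate_vector I D S \<in> rate_region I"
proof -
  define d where "d = character I D"
  define c where "c = 1 - real d / real TF"
  define H where "H = rate_region I"
  have TFp: "TF > 0" and dT: "d < TF" using big unfolding d_def by auto
  have cpos: "c > 0" unfolding c_def using dT by (simp add: field_simps)
  have c1: "c \<le> 1" unfolding c_def by simp
  have creal: "c = real (TF - d) / real TF" unfolding c_def using dT TFp by (simp add: field_simps of_nat_diff)
  have cvx: "convex H" unfolding H_def rate_region_def by simp
  have H0: "0 \<in> H" unfolding H_def by (rule indicator_vec_empty_in)
  have clH: "closed H" unfolding H_def rate_region_def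
    using region_fin(2) by (intro compact_imp_closed finite_imp_compact_convex_hull)
  define w where "w K = (1 / real K) *\<^sub>R (\<Sum>k<K. indicator_vec {l. S l (int k * int TF)})" for K
  have w_in: "w K \<in> H" for K
  proof (cases "K = 0")
    case True then show ?thesis using H0 unfolding w_def by simp
  next
    case False
    have "(\<Sum>k<K. (1 / real K) *\<^sub>R indicator_vec {l. S l (int k * int TF)}) \<in> H"
    proof (rule convex_sum[OF _ cvx])
      show "(\<Sum>k<K. 1 / real K) = 1" using False by simp
      fix k assume "k \<in> {..<K}"
      have "independent_set I {l. S l (int k * int TF)}"
        using frame_indep[OF bin fr big cf] .
      then show "indicator_vec {l. S l (int k * int TF)} \<in> H"
        unfolding H_def rate_region_def by (intro hull_inc) blast
    qed auto
    then show ?thesis unfolding w_def by (simp add: scaleR_sum_right)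
  qed
  have wc: "w K $ l = (\<Sum>k<K. if S l (int k * int TF) then 1 else 0) / real K" for K l
    unfolding w_def by (simp add: indicator_vec_nth)
  have avgK: "avg_success I D S l (K * TF) = c * (w K $ l)" for K l
  proof -
    have "avg_success I D S l (K * TF) = real (TF - d) * (\<Sum>k<K. if S l (int k * int TF) then 1 else 0) / real (K * TF)"
      unfolding avg_cf[OF cf] frame_sum[OF fr] d_def by simp
    also have "\<dots> = c * (w K $ l)" unfolding wc creal by simp
    finally show ?thesis .
  qed
  define L where "L l = lim (avg_success I D S l)" for l
  have conv: "avg_success I D S l \<longlonglongrightarrow> L l" for l
    using re unfolding rate_exists_def L_def by (simp add: convergent_LIMSEQ_iff)
  have sm: "strict_mono (\<lambda>K. K * TF)" using TFp by (intro strict_monoI) simp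
  have wl: "(\<lambda>K. w K $ l) \<longlonglongrightarrow> L l / c" for l
  proof -
    have "(\<lambda>K. avg_success I D S l (K * TF)) \<longlonglongrightarrow> L l"
      using LIMSEQ_subseq_LIMSEQ[OF conv sm] by (simp add: o_def)
    then have "(\<lambda>K. avg_success I D S l (K * TF) / c) \<longlonglongrightarrow> L l / c"
      using cpos by (auto intro!: tendsto_divide)
    moreover have "avg_success I D S l (K * TF) / c = w K $ l" for K
      using avgK cpos by simp
    ultimately show ?thesis by simp
  qed
  define W where "W = (\<chi> l. L l / c)"
  have "w \<longlonglongrightarrow> W" unfolding W_def by (rule vec_tendstoI) (simp add: wl)
  then have WH: "W \<in> H" by (rule closed_sequentially[OF clH w_in])
  have rv: "rate_vector I D S = c *\<^sub>R W"
    unfolding rate_vector_def W_def vec_eq_iff using cpos by (simp add: L_def)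
  have "c *\<^sub>R W + (1 - c) *\<^sub>R 0 \<in> H"
    by (rule convexD[OF cvx WH H0]) (use cpos c1 in auto)
  then have "c *\<^sub>R W \<in> H" by simp
  moreover have "c *\<^sub>R W \<in> (\<lambda>x. c *\<^sub>R x) ` H" using WH by (rule imageI)
  ultimately show ?thesis using rv unfolding H_def c_def d_def by simp
qed



lemma approx:
  fixes V :: "(real^'l::finite) set"
  assumes finV: "finite V" and R: "R \<in> convex hull V"
    and V01: "\<And>x l. x \<in> V \<Longrightarrow> 0 \<le> x $ l \<and> x $ l \<le> 1"
    and V0: "0 \<in> V"
  shows "\<exists>F. (\<forall>r. F r \<in> V) \<and> (\<forall>l. real N * R $ l - real (card V) \<le> (\<Sum>r<N. F r $ l))"
proof -
  obtain u where u0: "\<forall>x\<in>V. 0 \<le> u x" and u1: "sum u V = 1" and uR: "(\<Sum>x\<in>V. u x *\<^sub>R x) = R"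
    using R unfolding convex_hull_finite[OF finV] by blast
  define c where "c x = nat \<lfloor>real N * u x\<rfloor>" for x
  have c_le: "real (c x) \<le> real N * u x" if "x \<in> V" for x
    using u0 that unfolding c_def by (simp add: of_nat_nat)
  have c_ge: "real N * u x - 1 \<le> real (c x)" if "x \<in> V" for x
    using u0 that unfolding c_def by (simp add: of_nat_nat)
  define Sig where "Sig = Sigma V (\<lambda>x. {..<c x})"
  have finS: "finite Sig" unfolding Sig_def using finV by auto
  have cardS: "card Sig = (\<Sum>x\<in>V. c x)" unfolding Sig_def using finV by (simp add: card_SigmaI)
  have "real (card Sig) = (\<Sum>x\<in>V. real (c x))" unfolding cardS by simp
  also have "\<dots> \<le> (\<Sum>x\<in>V. real N * u x)" by (intro sum_mono c_le)
  also have "\<dots> = real N" using u1 by (simp add: sum_distrib_left[symmetric])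
  finally have "card Sig \<le> card {..<N}" by simp
  then obtain g where g: "g ` Sig \<subseteq> {..<N}" and inj: "inj_on g Sig"
    using card_le_inj[OF finS] by blast
  define F where "F r = (if r \<in> g ` Sig then fst (inv_into Sig g r) else 0)" for r
  have FV: "F r \<in> V" for r
  proof (cases "r \<in> g ` Sig")
    case True
    then have "inv_into Sig g r \<in> Sig" by (rule inv_into_into)
    then show ?thesis using True unfolding F_def Sig_def by auto
  qed (use V0 F_def in auto)
  have "real N * R $ l - real (card V) \<le> (\<Sum>r<N. F r $ l)" for l
  proof -
    have "real N * R $ l - real (card V) = (\<Sum>x\<in>V. (real N * u x) * x $ l - 1)"
      unfolding uR[symmetric] using finV
      by (simp add: sum_subtractf sum_distrib_left mult.assoc)
    also have "\<dots> \<le> (\<Sum>x\<in>V. real (c x) * x $ l)"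
    proof (rule sum_mono)
      fix x assume x: "x \<in> V"
      have "(real N * u x) * x $ l - 1 \<le> (real (c x) + 1) * x $ l - 1"
        using c_ge[OF x] V01[OF x] by (intro diff_right_mono mult_right_mono) auto
      also have "\<dots> \<le> real (c x) * x $ l" using V01[OF x] by (simp add: algebra_simps)
      finally show "(real N * u x) * x $ l - 1 \<le> real (c x) * x $ l" .
    qed
    also have "\<dots> = (\<Sum>x\<in>V. \<Sum>k\<in>{..<c x}. (\<lambda>x k. x $ l) x k)" by simp
    also have "\<dots> = (\<Sum>p\<in>Sig. case_prod (\<lambda>x k. x $ l) p)"
      unfolding Sig_def using finV by (intro sum.Sigma) auto
    also have "\<dots> = (\<Sum>p\<in>Sig. fst p $ l)" by (intro sum.cong) auto
    also have "\<dots> = (\<Sum>p\<in>Sig. F (g p) $ l)"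
      using inj unfolding F_def by (intro sum.cong) auto
    also have "\<dots> = (\<Sum>r\<in>g ` Sig. F r $ l)" using sum.reindex[OF inj, of "\<lambda>r. F r $ l"] by (simp add: o_def)
    also have "\<dots> \<le> (\<Sum>r<N. F r $ l)"
      using g V01 FV by (intro sum_mono2) auto
    finally show ?thesis .
  qed
  then show ?thesis using FV by blast
qed



lemma sched:
  fixes I :: "'l::finite \<Rightarrow> 'l set set" and D :: "'l \<Rightarrow> 'l \<Rightarrow> int" and F :: "nat \<Rightarrow> real^'l"
  assumes bin: "binary_profile I" and N: "N > 0" and TF: "TF \<ge> character I D + 1"
    and ind: "\<And>r. independent_set I {l. F r $ l = 1}"
    and S_def: "S = (\<lambda>l t. 0 \<le> t \<and> nat t mod TF < TF - character I D
                      \<and> F (nat t div TF mod N) $ l = 1)"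
  shows "framed_schedule I D TF S \<and> collision_free I D S \<and> rate_exists I D S \<and>
    (\<forall>l. rate_vector I D S $ l = real (TF - character I D) * (\<Sum>r<N. if F r $ l = 1 then 1 else 0) / (real N * real TF))"
proof -
  define d where "d = character I D"
  have TFp: "TF > 0" using TF by simp
  have Sn: "S l (int n) = (n mod TF < TF - d \<and> F (n div TF mod N) $ l = 1)" for l n
    unfolding S_def d_def by simp
  have fr: "framed_schedule I D TF S"
    unfolding framed_schedule_def
  proof (intro conjI)
    show "character I D + 1 \<le> TF" by (rule TF)
    show "\<forall>l t. t < 0 \<longrightarrow> \<not> S l t" unfolding S_def by simp
    show "\<forall>k l. (\<forall>i. TF - character I D \<le> i \<and> i < TF \<longrightarrow> \<not> S l (int k * int TF + int i)) \<and>
        (\<forall>i. i < TF - character I D \<longrightarrow> S l (int k * int TF + int i) = S l (int k * int TF))"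
    proof (intro allI, intro conjI)
    fix k l
    have kf: "(k * TF + i) mod TF = i \<and> (k * TF + i) div TF = k" if "i < TF" for i :: nat
      using that by simp
    have eq: "int k * int TF + int i = int (k * TF + i)" for i by simp
    show "\<forall>i. TF - character I D \<le> i \<and> i < TF \<longrightarrow> \<not> S l (int k * int TF + int i)"
      unfolding eq Sn d_def using kf by auto
    show "\<forall>i. i < TF - character I D \<longrightarrow> S l (int k * int TF + int i) = S l (int k * int TF)"
    proof (intro allI impI)
      fix i assume i: "i < TF - character I D"
      have "S l (int k * int TF) = S l (int (k * TF + 0))" by simp
      then show "S l (int k * int TF + int i) = S l (int k * int TF)"
        unfolding eq Sn d_def using kf[of i] kf[of 0] i TFp TF by simp
    qed
    qed
  qed
  have cf: "collision_free I D S"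
    unfolding collision_free_def has_collision_def
  proof (intro allI impI notI)
    fix l t assume St: "S l t" and "\<exists>\<phi>\<in>I l. \<forall>l'\<in>\<phi>. S l' (t + D l l')"
    then obtain \<phi> where \<phi>: "\<phi> \<in> I l" and all: "\<forall>l'\<in>\<phi>. S l' (t + D l l')" by blast
    obtain l' where \<phi>': "\<phi> = {l'}" using bin \<phi> unfolding binary_profile_def by blast
    define e where "e = D l l'"
    have S': "S l' (t + e)" using all \<phi>' unfolding e_def by simp
    have ed: "\<bar>e\<bar> \<le> int d" unfolding e_def d_def using char_bound[of \<phi> I l l' D] \<phi> \<phi>' by simp
    have t0: "t \<ge> 0" using St unfolding S_def by simp
    define n where "n = nat t"
    have tn: "t = int n" unfolding n_def using t0 by simp
    have te0: "t + e \<ge> 0" using S' unfolding S_def by simp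
    define m where "m = nat (t + e)"
    have tm: "t + e = int m" unfolding m_def using te0 by simp
    have Sl: "n mod TF < TF - d" "F (n div TF mod N) $ l = 1" using St Sn unfolding tn by auto
    have Sl': "m mod TF < TF - d" "F (m div TF mod N) $ l' = 1" using S' Sn unfolding tm by auto
    have same: False if "m div TF = n div TF"
    proof -
      let ?A = "{x. F (n div TF mod N) $ x = 1}"
      have "l \<in> ?A" "{l'} \<subseteq> ?A" using Sl Sl' that by auto
      then show False using ind[of "n div TF mod N"] \<phi> \<phi>' unfolding independent_set_def by blast
    qed
    show False
    proof (cases "e \<ge> 0")
      case True
      have mn: "m = n + nat e" using tn tm True by linarith
      have "n mod TF + nat e < TF" using Sl(1) ed True by linarith
      then have "m div TF = n div TF" unfolding mn using mod_add_same_frame by blast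
      then show False by (rule same)
    next
      case False
      have nm: "n = m + nat (- e)" using tn tm False by linarith
      show False
      proof (cases "m mod TF + nat (- e) < TF")
        case True
        then have "n div TF = m div TF" unfolding nm using mod_add_same_frame by blast
        then show False using same by simp
      next
        case False
        then show False using Sl'(1) ed by linarith
      qed
    qed
  qed
  define cnt where "cnt l = (\<Sum>r<N. if F r $ l = 1 then 1 else 0 :: real)" for l
  define f where "f l t = (if S l (int t) then 1 else 0 :: real)" for l t
  have per: "f l (t + N * TF) = f l t" for l t
  proof -
    have "(t + N * TF) mod TF = t mod TF" by simp
    moreover have "(t + N * TF) div TF = t div TF + N" using TFp by simp
    ultimately show ?thesis unfolding f_def Sn by simp
  qed
  have lim: "avg_success I D S l \<longlonglongrightarrow> real (TF - d) * cnt l / (real N * real TF)" for l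
  proof -
    have "(\<lambda>T. (\<Sum>t<T. f l t) / real T) \<longlonglongrightarrow> (\<Sum>t<N * TF. f l t) / real (N * TF)"
      by (rule periodic_avg) (use per N TFp in auto)
    moreover have "(\<Sum>t<N * TF. f l t) = real (TF - d) * cnt l"
    proof -
      have "(\<Sum>t<N * TF. f l t) = real (TF - d) * (\<Sum>k<N. if S l (int k * int TF) then 1 else 0)"
        unfolding f_def d_def by (rule frame_sum[OF fr])
      also have "(\<Sum>k<N. if S l (int k * int TF) then 1 else 0) = cnt l"
        unfolding cnt_def
      proof (intro sum.cong refl)
        fix k assume "k \<in> {..<N}"
        then have "S l (int k * int TF) = (F k $ l = 1)"
          using Sn[of l "k * TF"] TF TFp unfolding d_def by simp
        then show "(if S l (int k * int TF) then 1 else 0 :: real) = (if F k $ l = 1 then 1 else 0)"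
          by simp
      qed
      finally show ?thesis .
    qed
    moreover have "avg_success I D S l = (\<lambda>T. (\<Sum>t<T. f l t) / real T)"
      unfolding avg_cf[OF cf] f_def by simp
    ultimately show ?thesis by simp
  qed
  have re: "rate_exists I D S" unfolding rate_exists_def convergent_def using lim by blast
  have rv: "rate_vector I D S $ l = real (TF - d) * cnt l / (real N * real TF)" for l
    unfolding rate_vector_def using limI[OF lim] by simp
  show ?thesis using fr cf re rv unfolding cnt_def d_def by blast
qed



lemma part2:
  fixes I :: "'l::finite \<Rightarrow> 'l set set" and D :: "'l \<Rightarrow> 'l \<Rightarrow> int"
  assumes bin: "binary_profile I" and R: "R \<in> rate_region I" and eps: "\<epsilon> > 0"
  shows "\<exists>TF S. framed_schedule I D TF S \<and> collision_free I D S \<and> rate_exists I D S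
             \<and> (\<forall>l. rate_vector I D S $ l \<ge> R $ l - \<epsilon>)"
proof -
  define V where "V = {indicator_vec A | A. independent_set I A}"
  define d where "d = character I D"
  have finV: "finite V" unfolding V_def by (rule region_fin(2))
  have RV: "R \<in> convex hull V" using R unfolding V_def rate_region_def .
  have V01: "0 \<le> x $ l \<and> x $ l \<le> 1" if "x \<in> V" for x l
    using that unfolding V_def by (auto simp: indicator_vec_nth)
  have V0: "0 \<in> V"
  proof -
    have "indicator_vec {} = (0::real^'l)" unfolding indicator_vec_def by (simp add: vec_eq_iff)
    moreover have "independent_set I {}" unfolding independent_set_def by simp
    ultimately show ?thesis unfolding V_def by force
  qed
  define N where "N = nat \<lceil>(real (card V) + 1) / \<epsilon>\<rceil> + 1"
  have Np: "N > 0" unfolding N_def by simp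
  have "(real (card V) + 1) / \<epsilon> < real N" unfolding N_def by linarith
  then have Nbound: "(real (card V) + 1) / real N < \<epsilon>"
    using eps Np by (simp add: field_simps)
  obtain F where FV: "\<And>r. F r \<in> V" and Fb: "\<And>l. real N * R $ l - real (card V) \<le> (\<Sum>r<N. F r $ l)"
    using approx[OF finV RV V01 V0, of N] by blast
  define TF where "TF = (d + 1) * N"
  have TF1: "TF \<ge> d + 1"
  proof -
    have "1 \<le> N" using Np by simp
    then have "(d + 1) * 1 \<le> (d + 1) * N" by (rule mult_le_mono2)
    then show ?thesis unfolding TF_def by (simp only: mult_1_right)
  qed
  have ind: "independent_set I {l. F r $ l = 1}" for r
  proof -
    obtain A where A: "F r = indicator_vec A" "independent_set I A" using FV[of r] unfolding V_def by blast
    have "{l. F r $ l = 1} = A" unfolding A(1) by (auto simp: indicator_vec_nth)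
    then show ?thesis using A(2) by simp
  qed
  define S where "S = (\<lambda>l t. 0 \<le> t \<and> nat t mod TF < TF - character I D
                      \<and> F (nat t div TF mod N) $ l = 1)"
  have props: "framed_schedule I D TF S \<and> collision_free I D S \<and> rate_exists I D S \<and>
    (\<forall>l. rate_vector I D S $ l = real (TF - character I D) * (\<Sum>r<N. if F r $ l = 1 then 1 else 0) / (real N * real TF))"
    by (rule sched[OF bin Np _ ind S_def]) (use TF1 d_def in simp)
  have "R $ l - \<epsilon> \<le> rate_vector I D S $ l" for l
  proof -
    define y where "y = (\<Sum>r<N. F r $ l) / real N"
    have cnt: "(\<Sum>r<N. if F r $ l = 1 then 1 else 0) = (\<Sum>r<N. F r $ l)"
    proof (intro sum.cong refl)
      fix r
      obtain A where "F r = indicator_vec A" using FV[of r] unfolding V_def by blast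
      then show "(if F r $ l = 1 then 1 else 0) = F r $ l" by (simp add: indicator_vec_nth)
    qed
    have y1: "y \<le> 1"
    proof -
      have "(\<Sum>r<N. F r $ l) \<le> (\<Sum>r<N. 1)" using V01 FV by (intro sum_mono) auto
      then show ?thesis unfolding y_def using Np by simp
    qed
    have yR: "R $ l - real (card V) / real N \<le> y"
    proof -
      have "(real N * R $ l - real (card V)) / real N \<le> (\<Sum>r<N. F r $ l) / real N"
        using Fb[of l] by (rule divide_right_mono) simp
      moreover have "(real N * R $ l - real (card V)) / real N = R $ l - real (card V) / real N"
        using Np by (simp add: diff_divide_distrib)
      ultimately show ?thesis unfolding y_def by simp
    qed
    define a where "a = real d / real TF"
    have a0: "0 \<le> a" unfolding a_def by simp
    have aN: "a \<le> 1 / real N"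
    proof -
      have "real d / real TF \<le> real (d + 1) / real TF" by (rule divide_right_mono) auto
      moreover have "real (d + 1) / real TF = 1 / real N"
        unfolding TF_def of_nat_mult by (rule nonzero_divide_mult_cancel_left) simp
      ultimately show ?thesis unfolding a_def by simp
    qed
    have rv: "rate_vector I D S $ l = (1 - a) * y"
    proof -
      have "rate_vector I D S $ l = real (TF - d) * (\<Sum>r<N. F r $ l) / (real N * real TF)"
        using props cnt unfolding d_def by simp
      also have "\<dots> = (1 - a) * y" unfolding a_def y_def using TF1 Np
        by (simp add: of_nat_diff field_simps)
      finally show ?thesis .
    qed
    have "a * y \<le> a * 1" using y1 a0 by (rule mult_left_mono)
    then have "(1 - a) * y \<ge> y - a" by (simp add: algebra_simps)
    moreover have "real (card V) / real N + 1 / real N < \<epsilon>"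
      using Nbound by (simp add: add_divide_distrib)
    ultimately show ?thesis using rv yR aN by linarith
  qed
  then show ?thesis using props by blast
qed


theorem theorem3:
  fixes I :: "'l::finite \<Rightarrow> 'l set set" and D :: "'l \<Rightarrow> 'l \<Rightarrow> int"
  assumes "collision_sets_nonempty I"
    and "binary_profile I"
  shows "(\<forall>TF S. framed_schedule I D TF S \<and> TF \<ge> 2 * character I D + 1
             \<and> collision_free I D S \<and> rate_exists I D S \<longrightarrow>
             rate_vector I D S \<in>
               (\<lambda>x. (1 - real (character I D) / real TF) *\<^sub>R x) ` rate_region I
             \<and> rate_vector I D S \<in> rate_region I)
       \<and> (\<forall>R \<in> rate_region I. \<forall>\<epsilon>>0. \<exists>TF S. framed_schedule I D TF S
             \<and> collision_free I D S \<and> rate_exists I D S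
             \<and> (\<forall>l. rate_vector I D S $ l \<ge> R $ l - \<epsilon>))"
  using part1[OF assms(2)] part2[OF assms(2)] by blast

end
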